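(* Under the fixed admissible embedding $K\hookrightarrow M_2(\mathbb{Q})$, let $h_0$ be the point of the upper half plane fixed by $K^\times$ and write the image of $\varpi_c=\frac{cD+c\sqrt{D}}{2}$ as $\begin{pmatrix} x & y\\ z & w\end{pmatrix}$. Then $K=\mathbb{Q}+\mathbb{Q}h_0$ and $\mathcal{O}_c=\mathbb{Z}+\mathbb{Z}\, y h_0^{-1}$.
   Context: $K$ is an imaginary quadratic field of discriminant $D$, $c$ is a positive integer coprime to $N=N_0N_1^2$, and $\mathcal{O}_c=\mathbb{Z}+c\mathcal{O}_K=\mathbb{Z}+\mathbb{Z}\varpi_c$ with $\varpi_c=\frac{cD+c\sqrt{D}}{2}$. The embedding $K\hookrightarrow M_2(\mathbb{Q})$ is admissible, i.e. $K\cap M_2(\mathbb{Z})=K\cap R_0(N_0)=\mathcal{O}_c$, where $R_0(N_0)$ is the set of integer matrices that are upper triangular mod $N_0$. The entry $z$ is nonzero since $K$ is a field. *)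

theory Defs
  imports "HOL-Analysis.Analysis" "HOL-Computational_Algebra.Squarefree"
begin

definition imag_quad_disc :: "int \<Rightarrow> bool" where
  "imag_quad_disc D \<longleftrightarrow> D < 0 \<and>
     ((D mod 4 = 1 \<and> squarefree D) \<or>
      (D mod 4 = 0 \<and> squarefree (D div 4) \<and> (D div 4) mod 4 \<in> {2, 3}))"

definition sqrtD :: "int \<Rightarrow> complex" where
  "sqrtD D = \<i> * complex_of_real (sqrt (real_of_int (- D)))"

definition Kfield :: "int \<Rightarrow> complex set" where
  "Kfield D = {of_rat a + of_rat b * sqrtD D | a b. True}"

definition varpi :: "int \<Rightarrow> int \<Rightarrow> complex" where
  "varpi D c = (of_int (c * D) + of_int c * sqrtD D) / 2"

definition order_c :: "int \<Rightarrow> int \<Rightarrow> complex set" where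
  "order_c D c = {of_int m + of_int n * varpi D c | m n. True}"

definition int_mat :: "rat^2^2 \<Rightarrow> bool" where
  "int_mat A \<longleftrightarrow> (\<forall>i j. A $ i $ j \<in> \<int>)"

definition R0 :: "int \<Rightarrow> (rat^2^2) set" where
  "R0 N0 = {A. int_mat A \<and> (\<exists>k::int. A $ 2 $ 1 = of_int (N0 * k))}"

definition alg_embedding :: "int \<Rightarrow> (complex \<Rightarrow> rat^2^2) \<Rightarrow> bool" where
  "alg_embedding D \<iota> \<longleftrightarrow>
     \<iota> 1 = mat 1 \<and>
     (\<forall>a\<in>Kfield D. \<forall>b\<in>Kfield D. \<iota> (a + b) = \<iota> a + \<iota> b \<and> \<iota> (a * b) = \<iota> a ** \<iota> b) \<and>
     inj_on \<iota> (Kfield D)"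

definition admissible :: "int \<Rightarrow> int \<Rightarrow> int \<Rightarrow> (complex \<Rightarrow> rat^2^2) \<Rightarrow> bool" where
  "admissible D c N0 \<iota> \<longleftrightarrow>
     {a \<in> Kfield D. int_mat (\<iota> a)} = order_c D c \<and>
     {a \<in> Kfield D. \<iota> a \<in> R0 N0} = order_c D c"

definition moebius :: "rat^2^2 \<Rightarrow> complex \<Rightarrow> complex" where
  "moebius A h = (of_rat (A$1$1) * h + of_rat (A$1$2)) / (of_rat (A$2$1) * h + of_rat (A$2$2))"

end

theory Submission
  imports Defs
begin

lemma Kfield_iff: "x \<in> Kfield D \<longleftrightarrow> (\<exists>p q. x = of_rat p + of_rat q * sqrtD D)"
  by (auto simp: Kfield_def)

lemma sqrtD_sq: "D < 0 \<Longrightarrow> sqrtD D * sqrtD D = of_int D"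
proof -
  assume "D < 0"
  then have "sqrt (real_of_int (-D)) * sqrt (real_of_int (-D)) = real_of_int (-D)" by simp
  then have "complex_of_real (sqrt (real_of_int (-D))) * complex_of_real (sqrt (real_of_int (-D))) = of_int (-D)"
    by (metis of_real_mult of_real_of_int_eq)
  then show ?thesis unfolding sqrtD_def
    by (simp add: algebra_simps)
qed

lemma two_eq: "\<exists>s. (2::2) = s \<and> s \<noteq> 1"
  by auto

lemma span_eq:
  fixes z w :: complex and s k :: int
  assumes "z = of_int s * w + of_int k" "s * s = 1"
  shows "{of_int m + of_int n * w | m n :: int. True} = {of_int m + of_int n * z | m n :: int. True}"
proof (intro equalityI subsetI)
  fix x assume "x \<in> {of_int m + of_int n * w | m n :: int. True}"
  then obtain m n :: int where x: "x = of_int m + of_int n * w" by blast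
  have ss: "(of_int s :: complex) * of_int s = 1" using assms(2) by (metis of_int_1 of_int_mult)
  have "x = of_int (m - n * s * k) + of_int (n * s) * z"
    unfolding x assms(1) by (simp add: algebra_simps ss)
  then show "x \<in> {of_int m + of_int n * z | m n :: int. True}" by blast
next
  fix x assume "x \<in> {of_int m + of_int n * z | m n :: int. True}"
  then obtain m n :: int where x: "x = of_int m + of_int n * z" by blast
  have "x = of_int (m + n * k) + of_int (n * s) * w"
    unfolding x assms(1) by (simp add: algebra_simps)
  then show "x \<in> {of_int m + of_int n * w | m n :: int. True}" by blast
qed

theorem lemma2p3:
  fixes D c N0 N1 :: int and \<iota> :: "complex \<Rightarrow> rat^2^2" and h0 :: complex
  assumes "imag_quad_disc D"
    and "N0 > 0" and "N1 > 0" and "c > 0" and "coprime c (N0 * N1^2)"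
    and "alg_embedding D \<iota>"
    and "admissible D c N0 \<iota>"
    and "Im h0 > 0"
    and "\<forall>a \<in> Kfield D - {0}. moebius (\<iota> a) h0 = h0"
  shows "Kfield D = {of_rat p + of_rat q * h0 | p q. True}
    \<and> order_c D c = {of_int m + of_int n * (of_rat (\<iota> (varpi D c) $ 1 $ 2) * inverse h0) | m n. True}"
proof -
  define \<omega> where "\<omega> = sqrtD D"
  have Dneg: "D < 0" using assms(1) by (simp add: imag_quad_disc_def)
  have om2: "\<omega> * \<omega> = of_int D" using sqrtD_sq[OF Dneg] by (simp add: \<omega>_def)
  have omne: "\<omega> \<noteq> 0" using om2 Dneg by auto
  have emb1: "\<iota> 1 = mat 1" using assms(6) by (simp add: alg_embedding_def)
  have add: "\<iota> (x + y) = \<iota> x + \<iota> y" and mul: "\<iota> (x * y) = \<iota> x ** \<iota> y"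
    if "x \<in> Kfield D" "y \<in> Kfield D" for x y
    using assms(6) that by (auto simp: alg_embedding_def)
  have Kint: "of_int k \<in> Kfield D" for k
    unfolding Kfield_iff by (rule exI[of _ "of_int k"], rule exI[of _ 0]) simp
  have Kom: "\<omega> \<in> Kfield D"
    unfolding Kfield_iff \<omega>_def by (rule exI[of _ 0], rule exI[of _ 1]) simp
  have Kneg: "- x \<in> Kfield D" if xK: "x \<in> Kfield D" for x
  proof -
    obtain p q where "x = of_rat p + of_rat q * sqrtD D" using xK unfolding Kfield_iff by blast
    then show ?thesis unfolding Kfield_iff
      by (intro exI[of _ "-p"] exI[of _ "-q"]) (simp add: of_rat_minus)
  qed
  have i0: "\<iota> 0 = 0"
    using add[OF Kint[of 0] Kint[of 0]] by simp
  have ineg: "\<iota> (- x) = - \<iota> x" if "x \<in> Kfield D" for x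
    using add[OF that Kneg[OF that]] i0 by (simp add: eq_neg_iff_add_eq_0 add.commute)
  have inat: "\<iota> (of_nat n) = mat (of_nat n)" for n
  proof (induction n)
    case 0 then show ?case using i0 by simp
  next
    case (Suc n)
    have "\<iota> (of_nat (Suc n)) = \<iota> (of_int (int n) + of_int 1)" by (simp add: add.commute)
    also have "\<dots> = \<iota> (of_nat n) + \<iota> 1" using add[OF Kint Kint, of "int n" 1] by simp
    also have "\<dots> = mat (of_nat (Suc n))" using Suc emb1
      by (simp add: mat_def vec_eq_iff)
    finally show ?case .
  qed
  have iint: "\<iota> (of_int k) = mat (of_int k)" for k
  proof (cases "k \<ge> 0")
    case True then show ?thesis using inat[of "nat k"] by simp
  next
    case False
    then have "of_int k = - (of_nat (nat (-k)) :: complex)" by simp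
    moreover have Kn: "(of_nat (nat (-k)) :: complex) \<in> Kfield D"
      using Kint[of "int (nat (-k))"] by (metis of_int_of_nat_eq)
    ultimately have "\<iota> (of_int k) = - \<iota> (of_nat (nat (-k)))"
      using ineg[OF Kn] by metis
    also have "\<dots> = mat (of_int k)" using inat[of "nat (-k)"] False
      by (simp add: mat_def vec_eq_iff)
    finally show ?thesis .
  qed
  define M where "M = \<iota> \<omega>"
  define a where "a = M$1$1"
  define b where "b = M$1$2"
  define e where "e = M$2$1"
  define f where "f = M$2$2"
  have MM: "M ** M = mat (of_int D)"
    using mul[OF Kom Kom] om2 iint M_def by simp
  have e1: "a*a + b*e = of_int D" "a*b + b*f = 0" "e*a + f*e = 0" "e*b + f*f = of_int D"
    using MM unfolding vec_eq_iff
    by (auto simp: matrix_matrix_mult_def mat_def sum_2 forall_2 a_def b_def e_def f_def)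
  have faa: "f = - a"
  proof (rule ccontr)
    assume "f \<noteq> - a"
    then have af: "a + f \<noteq> 0" by (simp add: add_eq_0_iff2)
    have "b * (a + f) = 0" using e1(2) by (simp add: algebra_simps)
    then have b0: "b = 0" using af by simp
    have "e * (a + f) = 0" using e1(3) by (simp add: algebra_simps)
    then have "e = 0" using af by simp
    then have "a*a = of_int D" using e1 by simp
    moreover have "a * a \<ge> 0" by simp
    ultimately show False using Dneg by simp
  qed
  have bene: "b * e = of_int D - a * a" using e1 by simp
  have be0: "b * e \<noteq> 0"
  proof
    assume "b * e = 0"
    then have "a*a = of_int D" using bene by simp
    moreover have "a * a \<ge> 0" by simp
    ultimately show False using Dneg by simp
  qed
  then have b0: "b \<noteq> 0" and e0: "e \<noteq> 0" by auto
  define A B E F where "A = (of_rat a :: complex)" "B = (of_rat b :: complex)"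
     "E = (of_rat e :: complex)" "F = (of_rat f :: complex)"
  have h0ne: "h0 \<noteq> 0" using assms(8) by auto
  have omK0: "\<omega> \<in> Kfield D - {0}" using Kom omne by simp
  have fixpt: "(A * h0 + B) / (E * h0 + F) = h0"
    using assms(9) omK0 unfolding moebius_def A_B_E_F_def a_def b_def e_def f_def M_def by auto
  have den: "E * h0 + F \<noteq> 0"
  proof
    assume "E * h0 + F = 0"
    then show False using fixpt h0ne by simp
  qed
  have quad: "A * h0 + B = h0 * (E * h0 + F)" using fixpt den by (simp add: field_simps)
  have FA: "F = - A" using faa by (simp add: A_B_E_F_def of_rat_minus)
  have BE: "B * E = of_int D - A * A" using bene unfolding A_B_E_F_def
    by (metis of_rat_diff of_rat_mult of_rat_of_int_eq)
  define t where "t = E * h0 - A"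
  have q2: "E * h0 * h0 - 2 * A * h0 = B" using quad FA by (simp add: algebra_simps)
  have "t * t = \<omega> * \<omega>"
  proof -
    have "t * t = E * (E * h0 * h0 - 2 * A * h0) + A * A" by (simp add: t_def algebra_simps power2_eq_square)
    also have "\<dots> = E * B + A * A" by (simp only: q2)
    also have "\<dots> = \<omega> * \<omega>" using BE om2 by (simp add: algebra_simps)
    finally show ?thesis .
  qed
  then have "(t - \<omega>) * (t + \<omega>) = 0" by (simp add: algebra_simps)
  then have tcases: "t = \<omega> \<or> t = - \<omega>" by (auto simp: add_eq_0_iff2)
  have Eh: "E * h0 = A + t" by (simp add: t_def)
  have E0: "E \<noteq> 0" using e0 by (simp add: A_B_E_F_def)
  obtain \<sigma> :: rat where sg: "\<sigma> * \<sigma> = 1" "\<omega> = of_rat \<sigma> * t"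
  proof (cases "t = \<omega>")
    case True then show ?thesis using that[of 1] by simp
  next
    case False then have "t = - \<omega>" using tcases by simp
    then show ?thesis using that[of "-1"] by (simp add: of_rat_minus)
  qed
  have tsg: "t = of_rat \<sigma> * \<omega>"
  proof -
    have "of_rat \<sigma> * \<omega> = of_rat (\<sigma> * \<sigma>) * t" using sg(2) by (simp add: of_rat_mult)
    then show ?thesis using sg(1) by simp
  qed
  have part1: "Kfield D = {of_rat p + of_rat q * h0 | p q. True}"
  proof (intro equalityI subsetI)
    fix x assume "x \<in> Kfield D"
    then obtain p q where x: "x = of_rat p + of_rat q * \<omega>" unfolding Kfield_iff \<omega>_def by blast
    have "x = of_rat (p - q * \<sigma> * a) + of_rat (q * \<sigma> * e) * h0"
      unfolding x sg(2) t_def by (simp add: of_rat_diff of_rat_mult A_B_E_F_def algebra_simps)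
    then show "x \<in> {of_rat p + of_rat q * h0 | p q. True}" by blast
  next
    fix x assume "x \<in> {of_rat p + of_rat q * h0 | p q. True}"
    then obtain p q where x: "x = of_rat p + of_rat q * h0" by blast
    have h0e: "h0 = (A + t) / E" using Eh E0 by (simp add: field_simps)
    have "x = of_rat (p + q * a / e) + of_rat (q * \<sigma> / e) * \<omega>"
      unfolding x h0e tsg using E0 by (simp add: of_rat_add of_rat_mult of_rat_divide A_B_E_F_def field_simps)
    then show "x \<in> Kfield D" unfolding Kfield_iff \<omega>_def by blast
  qed
  define V where "V = \<iota> (varpi D c)"
  have Kcom: "of_int c * \<omega> \<in> Kfield D"
    unfolding Kfield_iff \<omega>_def by (rule exI[of _ 0], rule exI[of _ "of_int c"]) simp
  have Kvp: "varpi D c \<in> Kfield D"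
    unfolding Kfield_iff varpi_def
    by (rule exI[of _ "of_int (c*D) / 2"], rule exI[of _ "of_int c / 2"])
       (simp add: of_rat_divide of_rat_mult add_divide_distrib)
  have vv: "varpi D c + varpi D c = of_int (c * D) + of_int c * \<omega>"
    by (simp add: varpi_def \<omega>_def)
  have "V + V = mat (of_int (c*D)) + mat (of_int c) ** M"
  proof -
    have "V + V = \<iota> (varpi D c + varpi D c)" using add[OF Kvp Kvp] by (simp add: V_def)
    also have "\<dots> = \<iota> (of_int (c * D)) + \<iota> (of_int c * \<omega>)" by (simp only: vv add[OF Kint Kcom])
    also have "\<dots> = mat (of_int (c*D)) + mat (of_int c) ** M" by (simp only: mul[OF Kint Kom] iint M_def)
    finally show ?thesis .
  qed
  then have Ve: "V$1$1 + V$1$1 = of_int (c*D) + of_int c * a"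
     "V$1$2 + V$1$2 = of_int c * b"
     "V$2$2 + V$2$2 = of_int (c*D) + of_int c * f"
    unfolding vec_eq_iff
    by (auto simp: matrix_matrix_mult_def mat_def sum_2 forall_2 a_def b_def e_def f_def)
  have "varpi D c \<in> order_c D c" unfolding order_c_def
    by (rule CollectI, rule exI[of _ 0], rule exI[of _ 1]) simp
  then have "int_mat V" using assms(7) unfolding admissible_def V_def by blast
  then obtain n1 n2 :: int where n12: "V$1$1 = of_int n1" "V$2$2 = of_int n2"
    unfolding int_mat_def by (meson Ints_cases)
  define z where "z = of_rat (V $ 1 $ 2) * inverse h0"
  have zt: "z = (- of_int c * A + of_int c * t) / 2"
  proof -
    have zh: "z * h0 = of_int c * B / 2"
    proof -
      have "of_rat (V $ 1 $ 2) = (of_rat (of_int c * b / 2) :: complex)" using Ve(2) by simp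
      then show ?thesis unfolding z_def using h0ne
        by (simp add: of_rat_mult of_rat_divide A_B_E_F_def field_simps)
    qed
    have "E * ((- of_int c * A + of_int c * t) / 2 * h0) = (- of_int c * A + of_int c * t) / 2 * (E * h0)"
      by (simp only: ac_simps)
    also have "\<dots> = (- of_int c * A + of_int c * t) / 2 * (A + t)" by (simp only: Eh)
    also have "\<dots> = of_int c * (t * t - A * A) / 2" by (simp add: algebra_simps)
    also have "\<dots> = of_int c * (B * E) / 2"
      using BE \<open>t * t = \<omega> * \<omega>\<close> om2 by simp
    also have "\<dots> = E * (of_int c * B / 2)" by (simp add: ac_simps)
    finally have "(- of_int c * A + of_int c * t) / 2 * h0 = z * h0" using E0 zh by simp
    then show ?thesis using h0ne by simp
  qed
  have n1c: "of_int n1 + of_int n1 = of_int (c*D) + of_int c * A"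
  proof -
    have "(of_rat (of_int n1 + of_int n1) :: complex) = of_rat (of_int (c*D) + of_int c * a)"
      using Ve(1) n12 by simp
    then show ?thesis unfolding A_B_E_F_def by (simp only: of_rat_add of_rat_mult of_rat_of_int_eq)
  qed
  have n2c: "of_int n2 + of_int n2 = of_int (c*D) - of_int c * A"
  proof -
    have "(of_rat (of_int n2 + of_int n2) :: complex) = of_rat (of_int (c*D) - of_int c * a)"
      using Ve(3) n12 faa by simp
    then show ?thesis unfolding A_B_E_F_def by (simp only: of_rat_add of_rat_diff of_rat_mult of_rat_of_int_eq)
  qed
  have n1e: "of_int n1 = (of_int (c*D) + of_int c * A) / (2::complex)" using n1c by (simp add: field_simps)
  have n2e: "of_int n2 = (of_int (c*D) - of_int c * A) / (2::complex)" using n2c by (simp add: field_simps)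
  have vp: "varpi D c = (of_int (c*D) + of_int c * \<omega>) / 2" by (simp add: varpi_def \<omega>_def)
  have "\<exists>s k. z = of_int s * varpi D c + of_int k \<and> s * s = (1::int)"
  proof (cases "t = \<omega>")
    case True
    have "z = of_int 1 * varpi D c + of_int (- n1)"
      unfolding zt vp True of_int_minus n1e by (simp add: field_simps)
    then show ?thesis by (intro exI[of _ 1] exI[of _ "-n1"]) simp
  next
    case False then have "t = - \<omega>" using tcases by simp
    then have "z = of_int (-1) * varpi D c + of_int n2"
      unfolding zt vp \<open>t = - \<omega>\<close> of_int_minus n2e by (simp add: field_simps)
    then show ?thesis by (intro exI[of _ "-1"] exI[of _ "n2"]) simp
  qed
  then obtain s k where sk: "z = of_int s * varpi D c + of_int k" "s * s = (1::int)" by blast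
  have part2: "order_c D c = {of_int m + of_int n * (of_rat (\<iota> (varpi D c) $ 1 $ 2) * inverse h0) | m n. True}"
    unfolding order_c_def using span_eq[OF sk] unfolding z_def V_def by simp
  show ?thesis using part1 part2 by blast
qed

end
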